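(* Let $(X,P,o)$ be a generalized parametric metric space such that $P$ satisfies (P5) and $o$ is continuous. Then $(X,\tau_P)$ is normal: for any two disjoint closed sets $A,B\subseteq X$ there exist disjoint $U,V\in\tau_P$ with $A\subseteq U$ and $B\subseteq V$.
   Context: A binary operation $o:[0,\infty)\times[0,\infty)\to[0,\infty)$ (written $\alpha\, o\, \beta$) is assumed to satisfy, for all $\alpha,\beta,\gamma\in[0,\infty)$: (a) $\alpha\, o\, 0=\alpha$; (b) $\alpha\le\beta\implies \alpha\, o\,\gamma\le\beta\, o\,\gamma$; (c) $\alpha\, o\,\gamma=\gamma\, o\,\alpha$; (d) $\alpha\, o\,(\beta\, o\,\gamma)=(\alpha\, o\,\beta)\, o\,\gamma$. It is continuous if whenever $\alpha_n\to\alpha$ and $\beta_n\to\beta$ in $[0,\infty)$ we have $\alpha_n\, o\,\beta_n\to\alpha\, o\,\beta$. A generalized parametric metric on a nonempty set $X$ is a function $P:X\times X\times(0,\infty)\to[0,\infty)$ such that: (P1) $P(a,b,t)=0$ for all $t>0$ if and only if $a=b$; (P2) $P(a,b,t)=P(b,a,t)$ for all $a,b\in X$, $t>0$; (P3) $P(a,b,s+t)\le P(a,x,s)\, o\, P(b,x,t)$ for all $s,t>0$ and $a,b,x\in X$. The triple $(X,P,o)$ is a generalized parametric metric space. Condition (P5): for all $a,b\in X$, the map $t\mapsto P(a,b,t)$ is continuous on $(0,\infty)$. Open ball: $B(a,\alpha,t)=\{b\in X: P(a,b,t)<\alpha\}$. $\tau_P$ is the topology consisting of all $A\subseteq X$ such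 that for every $a\in A$ there exist $\alpha>0,t>0$ with $B(a,\alpha,t)\subseteq A$. A sequence $\{x_n\}$ converges to $x$ if $\lim_{n\to\infty}P(x_n,x,t)=0$ for all $t>0$. A set $A\subseteq X$ is closed if whenever a sequence in $A$ converges to some $x\in X$, then $x\in A$. *)

theory Defs
  imports "HOL-Analysis.Analysis"
begin

text \<open>A binary operation on [0,\<infinity>) (modelled as a real function, constrained on nonnegative reals).\<close>
definition gpm_operation :: "(real \<Rightarrow> real \<Rightarrow> real) \<Rightarrow> bool" where
  "gpm_operation op \<longleftrightarrow>
     (\<forall>a\<ge>0. \<forall>b\<ge>0. op a b \<ge> 0) \<and>
     (\<forall>a\<ge>0. op a 0 = a) \<and>
     (\<forall>a b c. 0 \<le> a \<longrightarrow> a \<le> b \<longrightarrow> 0 \<le> c \<longrightarrow> op a c \<le> op b c) \<and>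
     (\<forall>a\<ge>0. \<forall>c\<ge>0. op a c = op c a) \<and>
     (\<forall>a\<ge>0. \<forall>b\<ge>0. \<forall>c\<ge>0. op a (op b c) = op (op a b) c)"

definition op_continuous :: "(real \<Rightarrow> real \<Rightarrow> real) \<Rightarrow> bool" where
  "op_continuous op \<longleftrightarrow>
     (\<forall>a b (an :: nat \<Rightarrow> real) bn. (\<forall>n. an n \<ge> 0 \<and> bn n \<ge> 0) \<longrightarrow> a \<ge> 0 \<longrightarrow> b \<ge> 0 \<longrightarrow>
        an \<longlonglongrightarrow> a \<longrightarrow> bn \<longlonglongrightarrow> b \<longrightarrow> (\<lambda>n. op (an n) (bn n)) \<longlonglongrightarrow> op a b)"

text \<open>Generalized parametric metric space; the value of P at t \<le> 0 is irrelevant.\<close>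
definition gen_param_metric :: "('a \<Rightarrow> 'a \<Rightarrow> real \<Rightarrow> real) \<Rightarrow> (real \<Rightarrow> real \<Rightarrow> real) \<Rightarrow> bool" where
  "gen_param_metric P op \<longleftrightarrow> gpm_operation op \<and>
     (\<forall>a b t. t > 0 \<longrightarrow> P a b t \<ge> 0) \<and>
     (\<forall>a b. (\<forall>t>0. P a b t = 0) \<longleftrightarrow> a = b) \<and>
     (\<forall>a b t. t > 0 \<longrightarrow> P a b t = P b a t) \<and>
     (\<forall>a b x s t. s > 0 \<longrightarrow> t > 0 \<longrightarrow> P a b (s + t) \<le> op (P a x s) (P b x t))"

definition P5 :: "('a \<Rightarrow> 'a \<Rightarrow> real \<Rightarrow> real) \<Rightarrow> bool" where
  "P5 P \<longleftrightarrow> (\<forall>a b. continuous_on {0<..} (P a b))"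

definition pball :: "('a \<Rightarrow> 'a \<Rightarrow> real \<Rightarrow> real) \<Rightarrow> 'a \<Rightarrow> real \<Rightarrow> real \<Rightarrow> 'a set" where
  "pball P a \<alpha> t = {b. P a b t < \<alpha>}"

definition tauP :: "('a \<Rightarrow> 'a \<Rightarrow> real \<Rightarrow> real) \<Rightarrow> 'a set set" where
  "tauP P = {A. \<forall>a\<in>A. \<exists>\<alpha>>0. \<exists>t>0. pball P a \<alpha> t \<subseteq> A}"

definition pconverges :: "('a \<Rightarrow> 'a \<Rightarrow> real \<Rightarrow> real) \<Rightarrow> (nat \<Rightarrow> 'a) \<Rightarrow> 'a \<Rightarrow> bool" where
  "pconverges P xs x \<longleftrightarrow> (\<forall>t>0. (\<lambda>n. P (xs n) x t) \<longlonglongrightarrow> 0)"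

definition pclosed :: "('a \<Rightarrow> 'a \<Rightarrow> real \<Rightarrow> real) \<Rightarrow> 'a set \<Rightarrow> bool" where
  "pclosed P A \<longleftrightarrow> (\<forall>xs x. (\<forall>n. xs n \<in> A) \<longrightarrow> pconverges P xs x \<longrightarrow> x \<in> A)"

end

theory Submission
  imports Defs
begin

lemma gpm_facts:
  assumes "gen_param_metric P op"
  shows "\<And>a b t. t > 0 \<Longrightarrow> P a b t \<ge> 0"
    and "\<And>a t. t > 0 \<Longrightarrow> P a a t = 0"
    and "\<And>a b t. t > 0 \<Longrightarrow> P a b t = P b a t"
    and "\<And>a b x s t. s > 0 \<Longrightarrow> t > 0 \<Longrightarrow> P a b (s + t) \<le> op (P a x s) (P b x t)"
    and "\<And>a b. 0 \<le> a \<Longrightarrow> 0 \<le> b \<Longrightarrow> op a b \<ge> 0"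
    and "\<And>a. 0 \<le> a \<Longrightarrow> op a 0 = a"
    and "\<And>a b c. 0 \<le> a \<Longrightarrow> a \<le> b \<Longrightarrow> 0 \<le> c \<Longrightarrow> op a c \<le> op b c"
    and "\<And>a b c. 0 \<le> a \<Longrightarrow> b \<le> c \<Longrightarrow> 0 \<le> b \<Longrightarrow> op a b \<le> op a c"
proof -
  have g: "gpm_operation op" using assms unfolding gen_param_metric_def by (elim conjE) assumption
  have p1: "\<forall>a b t. t > 0 \<longrightarrow> P a b t \<ge> 0" using assms unfolding gen_param_metric_def by (elim conjE) assumption
  have p2: "\<forall>a b. (\<forall>t>0. P a b t = 0) \<longleftrightarrow> a = b" using assms unfolding gen_param_metric_def by (elim conjE) assumption
  have p3: "\<forall>a b t. t > 0 \<longrightarrow> P a b t = P b a t" using assms unfolding gen_param_metric_def by (elim conjE) assumption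
  have p4: "\<forall>a b x s t. s > 0 \<longrightarrow> t > 0 \<longrightarrow> P a b (s + t) \<le> op (P a x s) (P b x t)" using assms unfolding gen_param_metric_def by (elim conjE) assumption
  have o1: "\<forall>a\<ge>0. \<forall>b\<ge>0. op a b \<ge> 0" using g unfolding gpm_operation_def by (elim conjE) assumption
  have o2: "\<forall>a\<ge>0. op a 0 = a" using g unfolding gpm_operation_def by (elim conjE) assumption
  have o3: "\<forall>a b c. 0 \<le> a \<longrightarrow> a \<le> b \<longrightarrow> 0 \<le> c \<longrightarrow> op a c \<le> op b c" using g unfolding gpm_operation_def by (elim conjE) assumption
  have o4: "\<forall>a\<ge>0. \<forall>c\<ge>0. op a c = op c a" using g unfolding gpm_operation_def by (elim conjE) assumption
  show "\<And>a b t. t > 0 \<Longrightarrow> P a b t \<ge> 0" using p1 by simp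
  show "\<And>a b t. t > 0 \<Longrightarrow> P a b t = P b a t" using p3 by simp
  show "\<And>a b x s t. s > 0 \<Longrightarrow> t > 0 \<Longrightarrow> P a b (s + t) \<le> op (P a x s) (P b x t)" using p4 by simp
  show "\<And>a t. t > 0 \<Longrightarrow> P a a t = 0"
  proof -
    fix a :: 'a and t :: real assume "t > 0"
    have "\<forall>t>0. P a a t = 0" using p2 by simp
    then show "P a a t = 0" using \<open>t > 0\<close> by simp
  qed
  show "\<And>a b. 0 \<le> a \<Longrightarrow> 0 \<le> b \<Longrightarrow> op a b \<ge> 0" using o1 by simp
  show "\<And>a. 0 \<le> a \<Longrightarrow> op a 0 = a" using o2 by simp
  show "\<And>a b c. 0 \<le> a \<Longrightarrow> a \<le> b \<Longrightarrow> 0 \<le> c \<Longrightarrow> op a c \<le> op b c" using o3 by simp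
  fix a b c :: real assume h: "0 \<le> a" "b \<le> c" "0 \<le> b"
  have "op b a \<le> op c a" using o3 h by simp
  moreover have "op a b = op b a" using o4 h by simp
  moreover have "op a c = op c a" using o4 h by simp
  ultimately show "op a b \<le> op a c" by simp
qed

lemma P_antimono:
  assumes "gen_param_metric P op" "0 < s" "s \<le> t"
  shows "P a b t \<le> P a b s"
proof (cases "s = t")
  case False
  then have "t - s > 0" using assms by simp
  have "P a b (s + (t - s)) \<le> op (P a b s) (P b b (t - s))"
    using gpm_facts(4)[OF assms(1) assms(2) \<open>t - s > 0\<close>] by blast
  also have "\<dots> = P a b s" using gpm_facts(2,6,1)[OF assms(1)] \<open>t - s > 0\<close> assms(2) by simp
  finally show ?thesis by simp
qed simp

lemma ball_open:
  assumes gm: "gen_param_metric P op" and p5: "P5 P" and oc: "op_continuous op" and t: "t > 0"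
  shows "pball P a \<alpha> t \<in> tauP P"
  unfolding tauP_def
proof (clarify)
  fix z assume "z \<in> pball P a \<alpha> t"
  then have z: "P a z t < \<alpha>" unfolding pball_def by simp
  have "continuous_on {0<..} (P a z)" using p5 unfolding P5_def by blast
  then obtain \<delta> where \<delta>: "\<delta> > 0" "\<And>x'. x' \<in> {0<..} \<Longrightarrow> dist x' t < \<delta> \<Longrightarrow> dist (P a z x') (P a z t) < \<alpha> - P a z t"
    unfolding continuous_on_iff using t z by (metis diff_gt_0_iff_gt greaterThan_iff)
  define t0 where "t0 = max (t/2) (t - \<delta>/2)"
  have t0: "0 < t0" "t0 < t" "dist t0 t < \<delta>" using t \<delta> unfolding t0_def dist_real_def by auto
  have c: "P a z t0 < \<alpha>" using \<delta>(2)[of t0] t0 by (auto simp: dist_real_def)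
  define c where "c = P a z t0"
  have c0: "0 \<le> c" unfolding c_def using gpm_facts(1)[OF gm] t0 by blast
  have lim1: "(\<lambda>n. 1 / (real n + 1)) \<longlonglongrightarrow> 0"
    using LIMSEQ_inverse_real_of_nat by (simp add: inverse_eq_divide add.commute)
  have "(\<lambda>n. op c (1 / (real n + 1))) \<longlonglongrightarrow> op c 0"
    using oc c0 lim1 unfolding op_continuous_def by (auto intro!: tendsto_const)
  then have "(\<lambda>n. op c (1 / (real n + 1))) \<longlonglongrightarrow> c" using gpm_facts(6)[OF gm c0] by simp
  then have "eventually (\<lambda>n. op c (1 / (real n + 1)) < \<alpha>) sequentially"
    using c c_def order_tendstoD(2) by blast
  then obtain N where N: "op c (1 / (real N + 1)) < \<alpha>" using eventually_sequentially by auto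
  have sub: "pball P z (1 / (real N + 1)) (t - t0) \<subseteq> pball P a \<alpha> t"
  proof
    fix w assume "w \<in> pball P z (1 / (real N + 1)) (t - t0)"
    then have w: "P z w (t - t0) < 1 / (real N + 1)" unfolding pball_def by simp
    have tt: "t - t0 > 0" using t0 by simp
    have "P a w (t0 + (t - t0)) \<le> op (P a z t0) (P w z (t - t0))"
      using gpm_facts(4)[OF gm t0(1) tt] by blast
    also have "\<dots> \<le> op c (1 / (real N + 1))"
      using gpm_facts(8)[OF gm c0, of "P w z (t - t0)" "1 / (real N + 1)"] w
        gpm_facts(3)[OF gm tt, of z w] gpm_facts(1)[OF gm tt, of w z] c_def by simp
    finally show "w \<in> pball P a \<alpha> t" using N unfolding pball_def by simp
  qed
  show "\<exists>\<alpha>'>0. \<exists>t'>0. pball P z \<alpha>' t' \<subseteq> pball P a \<alpha> t"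
  proof (intro exI conjI)
    show "(0::real) < 1 / (real N + 1)" by simp
    show "(0::real) < t - t0" using t0 by simp
    show "pball P z (1 / (real N + 1)) (t - t0) \<subseteq> pball P a \<alpha> t" by (rule sub)
  qed
qed

lemma union_open: "(\<And>S. S \<in> F \<Longrightarrow> S \<in> tauP P) \<Longrightarrow> \<Union>F \<in> tauP P"
  unfolding tauP_def by blast

lemma sep:
  assumes gm: "gen_param_metric P op" and cl: "pclosed P B" and a: "a \<notin> B"
  shows "\<exists>n. \<forall>b\<in>B. 1 / (real n + 1) \<le> P a b (1 / (real n + 1))"
proof (rule ccontr)
  assume "\<not> ?thesis"
  then have "\<forall>n. \<exists>b. b \<in> B \<and> P a b (1 / (real n + 1)) < 1 / (real n + 1)"
    by (auto simp: not_le)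
  then obtain f where f: "\<And>n. f n \<in> B" "\<And>n. P a (f n) (1 / (real n + 1)) < 1 / (real n + 1)"
    by metis
  have "pconverges P f a"
    unfolding pconverges_def
  proof (intro allI impI)
    fix t :: real assume t: "t > 0"
    show "(\<lambda>n. P (f n) a t) \<longlonglongrightarrow> 0"
    proof (rule LIMSEQ_I)
      fix r :: real assume r: "r > 0"
      obtain N where N: "N > 0" "inverse (real N) < min t r" using ex_inverse_of_nat_less[of "min t r"] t r by auto
      show "\<exists>no. \<forall>n\<ge>no. norm (P (f n) a t - 0) < r"
      proof (intro exI allI impI)
        fix n assume n: "N \<le> n"
        have "1 / (real n + 1) \<le> inverse (real N)" using n N
          by (simp add: inverse_eq_divide frac_le)
        then have le: "1 / (real n + 1) < t" "1 / (real n + 1) < r" using N by auto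
        have "P (f n) a t = P a (f n) t" using gpm_facts(3)[OF gm t] by simp
        also have "\<dots> \<le> P a (f n) (1 / (real n + 1))"
          using P_antimono[OF gm _ less_imp_le[OF le(1)]] by simp
        finally have "P (f n) a t < r" using f(2)[of n] le by simp
        moreover have "P (f n) a t \<ge> 0" using gpm_facts(1)[OF gm t] by blast
        ultimately show "norm (P (f n) a t - 0) < r" by simp
      qed
    qed
  qed
  then show False using cl f(1) a unfolding pclosed_def by blast
qed

lemma d_exists:
  assumes gm: "gen_param_metric P op" and oc: "op_continuous op"
  shows "\<exists>d::nat \<Rightarrow> real. (\<forall>n. 0 < d n) \<and> (\<forall>n m. n \<le> m \<longrightarrow> d m \<le> d n) \<and> (\<forall>n. op (d n) (d n) < 1 / (real n + 1))"
proof -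
  define e :: "nat \<Rightarrow> real" where "e k = 1 / (real k + 1)" for k
  have lim1: "e \<longlonglongrightarrow> 0"
    using LIMSEQ_inverse_real_of_nat unfolding e_def by (simp add: inverse_eq_divide add.commute)
  have "(\<lambda>k. op (e k) (e k)) \<longlonglongrightarrow> op 0 0"
    using oc lim1 unfolding op_continuous_def e_def by auto
  then have L: "(\<lambda>k. op (e k) (e k)) \<longlonglongrightarrow> 0" using gpm_facts(6)[OF gm, of 0] by simp
  have ex: "\<exists>k. op (e k) (e k) < 1 / (real n + 1)" for n
  proof -
    have "eventually (\<lambda>k. op (e k) (e k) < 1 / (real n + 1)) sequentially"
      using order_tendstoD(2)[OF L] by simp
    then show ?thesis using eventually_sequentially by auto
  qed
  define K where "K n = (LEAST k. op (e k) (e k) < 1 / (real n + 1))" for n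
  have K: "op (e (K n)) (e (K n)) < 1 / (real n + 1)" for n
    unfolding K_def using LeastI_ex[OF ex] .
  have Kmono: "K n \<le> K m" if "n \<le> m" for n m
  proof -
    have "1 / (real m + 1) \<le> 1 / (real n + 1)" using that by (simp add: frac_le)
    then have "op (e (K m)) (e (K m)) < 1 / (real n + 1)" using K[of m] by simp
    then show ?thesis unfolding K_def[of n] by (rule Least_le)
  qed
  show ?thesis
  proof (intro exI[of _ "\<lambda>n. e (K n)"] conjI allI impI)
    fix n show "0 < e (K n)" unfolding e_def by simp
  next
    fix n m :: nat assume "n \<le> m"
    then show "e (K m) \<le> e (K n)" using Kmono unfolding e_def by (simp add: frac_le)
  next
    fix n show "op (e (K n)) (e (K n)) < 1 / (real n + 1)" using K .
  qed
qed

lemma key: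
  assumes gm: "gen_param_metric P op" and d0: "\<forall>n. 0 < d n"
    and dm: "\<forall>n m. n \<le> m \<longrightarrow> d m \<le> d n" and dop: "\<forall>n. op (d n) (d n) < 1 / (real n + 1)"
    and nm: "n \<le> m"
    and za: "P a z (1 / (2 * (real n + 1))) < d n"
    and zb: "P b z (1 / (2 * (real m + 1))) < d m"
  shows "P a b (1 / (real n + 1)) < 1 / (real n + 1)"
proof -
  define s where "s = 1 / (2 * (real n + 1))"
  define t where "t = 1 / (2 * (real m + 1))"
  have s0: "s > 0" and t0: "t > 0" unfolding s_def t_def by auto
  have "t \<le> s" unfolding s_def t_def using nm by (intro divide_left_mono) auto
  moreover have "s + s = 1 / (real n + 1)" unfolding s_def by (simp add: field_simps)
  ultimately have st: "s + t \<le> 1 / (real n + 1)" "s + t > 0" using s0 t0 by linarith+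
  have "P a b (1 / (real n + 1)) \<le> P a b (s + t)"
    using P_antimono[OF gm st(2) st(1)] .
  also have "\<dots> \<le> op (P a z s) (P b z t)" using gpm_facts(4)[OF gm s0 t0] .
  also have "\<dots> \<le> op (d n) (P b z t)"
  proof (rule gpm_facts(7)[OF gm])
    show "0 \<le> P a z s" using gpm_facts(1)[OF gm s0] .
    show "P a z s \<le> d n" using za unfolding s_def by simp
    show "0 \<le> P b z t" using gpm_facts(1)[OF gm t0] .
  qed
  also have "\<dots> \<le> op (d n) (d n)"
  proof (rule gpm_facts(8)[OF gm])
    show "0 \<le> d n" using d0 by (simp add: less_imp_le)
    have "d m \<le> d n" using dm nm by blast
    then show "P b z t \<le> d n" using zb unfolding t_def by simp
    show "0 \<le> P b z t" using gpm_facts(1)[OF gm t0] .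
  qed
  also have "\<dots> < 1 / (real n + 1)" using dop by blast
  finally show ?thesis .
qed

theorem mainTheorem11:
  fixes P :: "'a \<Rightarrow> 'a \<Rightarrow> real \<Rightarrow> real" and op :: "real \<Rightarrow> real \<Rightarrow> real"
  assumes "gen_param_metric P op" and "P5 P" and "op_continuous op"
    and "pclosed P A" and "pclosed P B" and "A \<inter> B = {}"
  shows "\<exists>U V. U \<in> tauP P \<and> V \<in> tauP P \<and> U \<inter> V = {} \<and> A \<subseteq> U \<and> B \<subseteq> V"
proof -
  note gm = assms(1)
  obtain d :: "nat \<Rightarrow> real" where d0: "\<forall>n. 0 < d n" and dm: "\<forall>n m. n \<le> m \<longrightarrow> d m \<le> d n"
    and dop: "\<forall>n. op (d n) (d n) < 1 / (real n + 1)"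
    using d_exists[OF gm assms(3)] by blast
  define na where "na a = (SOME n. \<forall>b\<in>B. 1 / (real n + 1) \<le> P a b (1 / (real n + 1)))" for a
  define nb where "nb b = (SOME n. \<forall>a\<in>A. 1 / (real n + 1) \<le> P b a (1 / (real n + 1)))" for b
  have na: "\<forall>b\<in>B. 1 / (real (na a) + 1) \<le> P a b (1 / (real (na a) + 1))" if "a \<in> A" for a
  proof -
    have "a \<notin> B" using that assms(6) by blast
    from sep[OF gm assms(5) this] show ?thesis unfolding na_def by (rule someI_ex)
  qed
  have nb: "\<forall>a\<in>A. 1 / (real (nb b) + 1) \<le> P b a (1 / (real (nb b) + 1))" if "b \<in> B" for b
  proof -
    have "b \<notin> A" using that assms(6) by blast
    from sep[OF gm assms(4) this] show ?thesis unfolding nb_def by (rule someI_ex)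
  qed
  define U where "U = (\<Union>a\<in>A. pball P a (d (na a)) (1 / (2 * (real (na a) + 1))))"
  define V where "V = (\<Union>b\<in>B. pball P b (d (nb b)) (1 / (2 * (real (nb b) + 1))))"
  have "U \<in> tauP P" unfolding U_def
    by (rule union_open) (auto intro: ball_open[OF gm assms(2,3)])
  moreover have "V \<in> tauP P" unfolding V_def
    by (rule union_open) (auto intro: ball_open[OF gm assms(2,3)])
  moreover have "A \<subseteq> U"
  proof
    fix a assume a: "a \<in> A"
    have "P a a (1 / (2 * (real (na a) + 1))) = 0" using gpm_facts(2)[OF gm] by simp
    then have "a \<in> pball P a (d (na a)) (1 / (2 * (real (na a) + 1)))" unfolding pball_def using d0 by simp
    then show "a \<in> U" unfolding U_def using a by blast
  qed
  moreover have "B \<subseteq> V"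
  proof
    fix a assume a: "a \<in> B"
    have "P a a (1 / (2 * (real (nb a) + 1))) = 0" using gpm_facts(2)[OF gm] by simp
    then have "a \<in> pball P a (d (nb a)) (1 / (2 * (real (nb a) + 1)))" unfolding pball_def using d0 by simp
    then show "a \<in> V" unfolding V_def using a by blast
  qed
  moreover have "U \<inter> V = {}"
  proof (rule ccontr)
    assume "U \<inter> V \<noteq> {}"
    then obtain z where zU: "z \<in> U" and zV: "z \<in> V" by blast
    from zU obtain a where a: "a \<in> A" and za: "P a z (1 / (2 * (real (na a) + 1))) < d (na a)"
      unfolding U_def pball_def by blast
    from zV obtain b where b: "b \<in> B" and zb: "P b z (1 / (2 * (real (nb b) + 1))) < d (nb b)"
      unfolding V_def pball_def by blast
    show False
    proof (cases "na a \<le> nb b")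
      case True
      from key[OF gm d0 dm dop True za zb] na[OF a] b show False by (meson not_le)
    next
      case False
      then have "nb b \<le> na a" by simp
      from key[OF gm d0 dm dop this zb za] nb[OF b] a show False by (meson not_le)
    qed
  qed
  ultimately show ?thesis by blast
qed

end
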